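(* Let $f(r),\xi(r)$ be smooth functions on $r\ge1$ with $\xi=0$ on $[1,R]$ for some $R>1$, let $n\in\mathbb Z\setminus\{0\}$, and let $\phi_n$ be the solution (given by the Green function formula, decaying as $r\to\infty$) of $$\Big(\partial_r^2+\tfrac1r\partial_r-\tfrac{n^2}{r^2}\Big)\phi_n=\xi(r)\partial_rf(r),\qquad\phi_n(1)=0.$$ Then $$|n|\,\Big\|\frac{\phi_n(r)}r\Big\|_{L^\infty(1,\infty)}\lesssim\|\xi f\|_{L^\infty}+\|\xi'f\|_{L^1},$$ with a constant independent of $n$.
   Context: The decaying solution is $-2|n|\phi_n(r)=\int_1^r\frac{s^{1+|n|}-s^{1-|n|}}{r^{|n|}}F(s)ds+\int_r^\infty\big(s^{1-|n|}r^{|n|}-s^{1-|n|}r^{-|n|}\big)F(s)ds$ with $F=\xi\partial_rf$. *)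

theory Defs
  imports "HOL-Analysis.Analysis"
begin

definition smooth_on :: "(real \<Rightarrow> real) \<Rightarrow> real set \<Rightarrow> bool" where
  "smooth_on g S \<longleftrightarrow> (\<forall>k. \<forall>x\<in>S. ((deriv ^^ k) g) differentiable (at x))"

definition green_phi :: "int \<Rightarrow> (real \<Rightarrow> real) \<Rightarrow> (real \<Rightarrow> real) \<Rightarrow> real \<Rightarrow> real" where
  "green_phi n xi f r =
     (let m = real_of_int \<bar>n\<bar>; F = (\<lambda>s. xi s * deriv f s) in
      - (1 / (2 * m)) *
        (integral {1..r} (\<lambda>s. (s powr (1 + m) - s powr (1 - m)) / r powr m * F s)
       + integral {r..} (\<lambda>s. (s powr (1 - m) * r powr m - s powr (1 - m) * r powr (- m)) * F s)))"

end

theory Submission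
  imports Defs
begin

lemma ibp:
  fixes K K' G g F :: "real \<Rightarrow> real"
  assumes ab: "a \<le> b"
   and dK: "\<And>x. x \<in> {a..b} \<Longrightarrow> (K has_real_derivative K' x) (at x)"
   and dG: "\<And>x. x \<in> {a..b} \<Longrightarrow> (G has_real_derivative (g x + F x)) (at x)"
   and cK': "continuous_on {a..b} K'" and cg: "continuous_on {a..b} g" and cF: "continuous_on {a..b} F"
  shows "integral {a..b} (\<lambda>s. K s * F s) = K b * G b - K a * G a
          - integral {a..b} (\<lambda>s. K' s * G s) - integral {a..b} (\<lambda>s. K s * g s)"
proof -
  have cK: "continuous_on {a..b} K"
    using dK by (meson DERIV_isCont continuous_at_imp_continuous_on)
  have cG: "continuous_on {a..b} G"
    using dG by (meson DERIV_isCont continuous_at_imp_continuous_on)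
  have d: "((\<lambda>s. K s * G s) has_vector_derivative (K' x * G x + K x * (g x + F x))) (at x within {a..b})"
    if x: "x \<in> {a..b}" for x
  proof -
    have "((\<lambda>s. K s * G s) has_real_derivative (K' x * G x + K x * (g x + F x))) (at x)"
      using DERIV_mult[OF dK[OF x] dG[OF x]] by (simp add: algebra_simps)
    then show ?thesis
      by (simp add: has_real_derivative_iff_has_vector_derivative[symmetric] has_field_derivative_at_within)
  qed
  have I: "((\<lambda>s. K' s * G s + K s * (g s + F s)) has_integral (K b * G b - K a * G a)) {a..b}"
    by (rule fundamental_theorem_of_calculus[OF ab d])
  have i1: "(\<lambda>s. K' s * G s) integrable_on {a..b}"
    by (intro integrable_continuous_interval continuous_intros cK' cG)
  have i2: "(\<lambda>s. K s * g s) integrable_on {a..b}"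
    by (intro integrable_continuous_interval continuous_intros cK cg)
  have i3: "(\<lambda>s. K s * F s) integrable_on {a..b}"
    by (intro integrable_continuous_interval continuous_intros cK cF)
  have "integral {a..b} (\<lambda>s. K' s * G s + K s * (g s + F s)) = K b * G b - K a * G a"
    using I by (rule integral_unique)
  moreover have "integral {a..b} (\<lambda>s. K' s * G s + K s * (g s + F s))
     = integral {a..b} (\<lambda>s. K' s * G s) + (integral {a..b} (\<lambda>s. K s * g s) + integral {a..b} (\<lambda>s. K s * F s))"
    by (simp add: distrib_left integral_add i1 i2 i3 integrable_add)
  ultimately show ?thesis by linarith
qed

lemma ibp_bound:
  fixes K K' G g F :: "real \<Rightarrow> real"
  assumes ab: "a \<le> b"
   and dK: "\<And>x. x \<in> {a..b} \<Longrightarrow> (K has_real_derivative K' x) (at x)"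
   and dG: "\<And>x. x \<in> {a..b} \<Longrightarrow> (G has_real_derivative (g x + F x)) (at x)"
   and cK': "continuous_on {a..b} K'" and cg: "continuous_on {a..b} g" and cF: "continuous_on {a..b} F"
   and hG: "\<And>x. x \<in> {a..b} \<Longrightarrow> \<bar>G x\<bar> \<le> S"
   and hK: "\<And>x. x \<in> {a..b} \<Longrightarrow> 0 \<le> K x \<and> K x \<le> M"
   and sgn: "(\<forall>x\<in>{a..b}. 0 \<le> K' x) \<or> (\<forall>x\<in>{a..b}. K' x \<le> 0)"
  shows "\<bar>integral {a..b} (\<lambda>s. K s * F s)\<bar> \<le> K b * S + K a * S + \<bar>K b - K a\<bar> * S
            + M * integral {a..b} (\<lambda>s. \<bar>g s\<bar>)"
proof -
  have cK: "continuous_on {a..b} K"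
    using dK by (meson DERIV_isCont continuous_at_imp_continuous_on)
  have cG: "continuous_on {a..b} G"
    using dG by (meson DERIV_isCont continuous_at_imp_continuous_on)
  have S0: "0 \<le> S" using hG[of a] ab by force
  have FT: "(K' has_integral (K b - K a)) {a..b}"
    by (rule fundamental_theorem_of_calculus[OF ab])
       (use dK in \<open>auto simp: has_real_derivative_iff_has_vector_derivative[symmetric] has_field_derivative_at_within\<close>)
  have i1: "(\<lambda>s. K' s * G s) integrable_on {a..b}"
    by (intro integrable_continuous_interval continuous_intros cK' cG)
  have i2: "(\<lambda>s. K s * g s) integrable_on {a..b}"
    by (intro integrable_continuous_interval continuous_intros cK cg)
  have ig: "(\<lambda>s. M * \<bar>g s\<bar>) integrable_on {a..b}"
    by (intro integrable_continuous_interval continuous_intros cg)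
  have B1: "\<bar>integral {a..b} (\<lambda>s. K' s * G s)\<bar> \<le> \<bar>K b - K a\<bar> * S"
    using sgn
  proof
    assume h: "\<forall>x\<in>{a..b}. 0 \<le> K' x"
    have "norm (integral {a..b} (\<lambda>s. K' s * G s)) \<le> integral {a..b} (\<lambda>s. K' s * S)"
      apply (rule Henstock_Kurzweil_Integration.integral_norm_bound_integral[OF i1])
      using has_integral_mult_left[OF FT] apply blast
      using h hG by (auto simp: abs_mult intro: mult_left_mono)
    also have "\<dots> = (K b - K a) * S"
      using has_integral_mult_left[OF FT] by (rule integral_unique)
    also have "\<dots> \<le> \<bar>K b - K a\<bar> * S" using S0 by (intro mult_right_mono) auto
    finally show ?thesis by simp
  next
    assume h: "\<forall>x\<in>{a..b}. K' x \<le> 0"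
    have bd: "norm (K' x * G x) \<le> K' x * (-S)" if x: "x \<in> {a..b}" for x
    proof -
      have "norm (K' x * G x) = (-K' x) * \<bar>G x\<bar>" using h x by (simp add: abs_mult abs_of_nonpos)
      also have "\<dots> \<le> (-K' x) * S" using h x hG[OF x] by (intro mult_left_mono) auto
      finally show ?thesis by simp
    qed
    have "norm (integral {a..b} (\<lambda>s. K' s * G s)) \<le> integral {a..b} (\<lambda>s. K' s * (-S))"
      apply (rule Henstock_Kurzweil_Integration.integral_norm_bound_integral[OF i1])
      using has_integral_mult_left[OF FT] apply blast
      using bd by blast
    also have "\<dots> = (K b - K a) * (-S)"
      using has_integral_mult_left[OF FT] by (rule integral_unique)
    also have "\<dots> = (-(K b - K a)) * S" by (simp add: algebra_simps)
    also have "\<dots> \<le> \<bar>K b - K a\<bar> * S" using S0 by (intro mult_right_mono) auto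
    finally show ?thesis by simp
  qed
  have B2: "\<bar>integral {a..b} (\<lambda>s. K s * g s)\<bar> \<le> M * integral {a..b} (\<lambda>s. \<bar>g s\<bar>)"
  proof -
    have "norm (integral {a..b} (\<lambda>s. K s * g s)) \<le> integral {a..b} (\<lambda>s. M * \<bar>g s\<bar>)"
      apply (rule Henstock_Kurzweil_Integration.integral_norm_bound_integral[OF i2 ig])
      using hK by (auto simp: abs_mult intro: mult_right_mono)
    then show ?thesis by simp
  qed
  have B3: "\<bar>K b * G b\<bar> \<le> K b * S" "\<bar>K a * G a\<bar> \<le> K a * S"
    using hK[of a] hK[of b] hG[of a] hG[of b] ab by (auto simp: abs_mult intro: mult_left_mono)
  show ?thesis
    using ibp[OF ab dK dG cK' cg cF] B1 B2 B3 by linarith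
qed

lemma Ici_integrable_sub:
  fixes h :: "real \<Rightarrow> real"
  assumes "h integrable_on {a..}" "a \<le> r"
  shows "h integrable_on {r..}"
proof -
  have "h integrable_on {a..r}" using integrable_on_subinterval[OF assms(1)] by auto
  then have "h integrable_on ({a..} - {a..r})"
    using assms(1) integrable_setdiff by (metis integrable_on_def negligible_setdiff Icc_subset_Ici_iff order_refl)
  moreover have "{a..} - {a..r} = {r<..}" using assms(2) by auto
  ultimately have "h integrable_on {r<..}" by simp
  then show ?thesis
    by (rule integrable_spike_set) (auto intro: negligible_subset[OF negligible_sing[of r]])
qed

lemma Ici_limit:
  fixes h :: "real \<Rightarrow> real"
  assumes "(h has_integral i) {a..}"
  shows "((\<lambda>T. integral {a..T} h) \<longlongrightarrow> i) at_top"
proof (rule tendstoI)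
  fix e :: real assume e: "e > 0"
  from assms have "\<exists>B>0. \<forall>c d. ball 0 B \<subseteq> cbox c d \<longrightarrow>
            norm (integral (cbox c d) (\<lambda>x. if x \<in> {a..} then h x else 0) - i) < e"
    unfolding has_integral_alt'[of h i] using e by blast
  then obtain B where B: "B > 0" "\<And>c d. ball 0 B \<subseteq> cbox c d \<Longrightarrow>
            norm (integral (cbox c d) (\<lambda>x. if x \<in> {a..} then h x else 0) - i) < e" by blast
  show "\<forall>\<^sub>F T in at_top. dist (integral {a..T} h) i < e"
  proof (rule eventually_at_top_linorderI[of "max B \<bar>a\<bar>"])
    fix T assume T: "T \<ge> max B \<bar>a\<bar>"
    have sub: "ball 0 B \<subseteq> cbox (- max B \<bar>a\<bar>) T" using T by (auto simp: dist_real_def)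
    have "integral (cbox (- max B \<bar>a\<bar>) T) (\<lambda>x. if x \<in> {a..} then h x else 0) = integral ({a..} \<inter> cbox (- max B \<bar>a\<bar>) T) h"
      by (rule integral_restrict_Int)
    also have "{a..} \<inter> cbox (- max B \<bar>a\<bar>) T = {a..T}" by auto
    finally show "dist (integral {a..T} h) i < e"
      using B(2)[OF sub] by (simp add: dist_norm)
  qed
qed

theorem lemma4p6:
  "\<exists>C>0. \<forall>(n::int) (f::real \<Rightarrow> real) (xi::real \<Rightarrow> real) (R::real).
     n \<noteq> 0 \<and> R > 1 \<and> smooth_on f {1..} \<and> smooth_on xi {1..}
     \<and> (\<forall>s\<in>{1..R}. xi s = 0)
     \<and> (\<lambda>s. s powr (1 - real_of_int \<bar>n\<bar>) * (xi s * deriv f s)) integrable_on {1..}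
     \<and> bdd_above ((\<lambda>s. \<bar>xi s * f s\<bar>) ` {1..})
     \<and> (\<lambda>s. deriv xi s * f s) absolutely_integrable_on {1..}
     \<longrightarrow> (\<forall>r\<ge>1. real_of_int \<bar>n\<bar> * (\<bar>green_phi n xi f r\<bar> / r)
            \<le> C * ((SUP s\<in>{1..}. \<bar>xi s * f s\<bar>) + integral {1..} (\<lambda>s. \<bar>deriv xi s * f s\<bar>)))"
proof (rule exI[of _ 2], intro conjI allI impI)
  show "(0::real) < 2" by simp
next
  fix n :: int and f xi :: "real \<Rightarrow> real" and R r :: real
  assume H: "n \<noteq> 0 \<and> R > 1 \<and> smooth_on f {1..} \<and> smooth_on xi {1..}
     \<and> (\<forall>s\<in>{1..R}. xi s = 0)
     \<and> (\<lambda>s. s powr (1 - real_of_int \<bar>n\<bar>) * (xi s * deriv f s)) integrable_on {1..}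
     \<and> bdd_above ((\<lambda>s. \<bar>xi s * f s\<bar>) ` {1..})
     \<and> (\<lambda>s. deriv xi s * f s) absolutely_integrable_on {1..}"
    and r: "1 \<le> r"
  define m where "m = real_of_int \<bar>n\<bar>"
  define F where "F = (\<lambda>s. xi s * deriv f s)"
  define G where "G = (\<lambda>s. xi s * f s)"
  define g where "g = (\<lambda>s. deriv xi s * f s)"
  define S where "S = (SUP s\<in>{1..}. \<bar>xi s * f s\<bar>)"
  define L where "L = integral {1..} (\<lambda>s. \<bar>deriv xi s * f s\<bar>)"
  from H have hn: "n \<noteq> 0" and sf: "smooth_on f {1..}" and sxi: "smooth_on xi {1..}"
    and hint: "(\<lambda>s. s powr (1 - m) * F s) integrable_on {1..}"
    and hbdd: "bdd_above ((\<lambda>s. \<bar>xi s * f s\<bar>) ` {1..})"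
    and habs: "(\<lambda>s. deriv xi s * f s) absolutely_integrable_on {1..}"
    by (auto simp: m_def F_def)
  have "\<bar>n\<bar> \<ge> 1" using hn by linarith
  then have m1: "m \<ge> 1" unfolding m_def by (metis of_int_1 of_int_le_iff)
  have df: "f differentiable (at x)" "xi differentiable (at x)"
     "deriv f differentiable (at x)" "deriv xi differentiable (at x)" if "x \<ge> 1" for x
  proof -
    have dd: "\<And>k. (deriv^^k) f differentiable (at x) \<and> (deriv^^k) xi differentiable (at x)"
      using sf sxi that unfolding smooth_on_def by auto
    from dd[of 0] dd[of 1] show "f differentiable (at x)" "xi differentiable (at x)"
     "deriv f differentiable (at x)" "deriv xi differentiable (at x)" by simp_all
  qed
  have cts: "isCont f x" "isCont xi x" "isCont (deriv f) x" "isCont (deriv xi) x" if "x \<ge> 1" for x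
    using df[OF that] by (auto intro: differentiable_imp_continuous_within)
  have dG: "(G has_real_derivative (g x + F x)) (at x)" if "x \<ge> 1" for x
  proof -
    have a: "(xi has_real_derivative deriv xi x) (at x)" "(f has_real_derivative deriv f x) (at x)"
      using df[OF that] by (simp_all add: DERIV_deriv_iff_real_differentiable)
    show ?thesis using DERIV_mult[OF a] unfolding G_def g_def F_def by (simp add: algebra_simps)
  qed
  have cF: "continuous_on {a..b} F" "continuous_on {a..b} g" if "1 \<le> a" for a b
    unfolding F_def g_def using that
    by (auto intro!: continuous_at_imp_continuous_on isCont_mult cts)
  have hGS: "\<bar>G x\<bar> \<le> S" if "x \<ge> 1" for x
    unfolding G_def S_def using that by (intro cSUP_upper[OF _ hbdd]) auto
  have S0: "S \<ge> 0" using hGS[of 1] by simp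
  have iag: "(\<lambda>s. \<bar>g s\<bar>) integrable_on {1..}"
    using habs unfolding absolutely_integrable_on_def g_def by (simp add: real_norm_def)
  have L0: "L \<ge> 0" unfolding L_def
    using iag unfolding g_def by (intro Henstock_Kurzweil_Integration.integral_nonneg) auto
  have hL: "integral {a..b} (\<lambda>s. \<bar>g s\<bar>) \<le> L" if "1 \<le> a" for a b
  proof (cases "a \<le> b")
    case True
    have "integral {a..b} (\<lambda>s. \<bar>g s\<bar>) \<le> integral {1..} (\<lambda>s. \<bar>g s\<bar>)"
      by (rule integral_subset_le) (use that iag integrable_on_subinterval[OF iag] in auto)
    then show ?thesis by (simp add: L_def g_def)
  next
    case False then show ?thesis using L0 by simp
  qed
  define K1 where "K1 = (\<lambda>s::real. s powr (1+m) - s powr (1-m))"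
  define K1' where "K1' = (\<lambda>s::real. (1+m) * s powr m - (1-m) * s powr (-m))"
  define M1 where "M1 = r powr (1+m)"
  define A where "A = integral {1..r} (\<lambda>s. (s powr (1 + m) - s powr (1 - m)) / r powr m * F s)"
  have dK1: "(K1 has_real_derivative K1' x) (at x)" if "x \<in> {1..r}" for x
  proof -
    have "x > 0" using that by auto
    from DERIV_diff[OF has_real_derivative_powr[OF this, of "1+m"] has_real_derivative_powr[OF this, of "1-m"]]
    show ?thesis unfolding K1_def K1'_def by simp
  qed
  have cK1': "continuous_on {1..r} K1'"
    unfolding K1'_def by (intro continuous_intros) auto
  have hK1: "0 \<le> K1 x \<and> K1 x \<le> M1" if "x \<in> {1..r}" for x
  proof -
    have "x powr (1-m) \<le> x powr (1+m)" using that m1 by (intro powr_mono) auto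
    moreover have "x powr (1+m) \<le> M1" unfolding M1_def using that m1 by (intro powr_mono2) auto
    moreover have "0 \<le> x powr (1-m)" by simp
    ultimately show ?thesis unfolding K1_def by linarith
  qed
  have sK1: "(\<forall>x\<in>{1..r}. 0 \<le> K1' x) \<or> (\<forall>x\<in>{1..r}. K1' x \<le> 0)"
  proof (rule disjI1, intro ballI)
    fix x assume x: "x \<in> {1..r}"
    have a: "0 \<le> (1+m) * x powr m" using m1 by simp
    have b: "0 \<le> (m-1) * x powr (-m)" using m1 by simp
    have c: "(1-m) * x powr (-m) = -((m-1) * x powr (-m))" by (simp add: algebra_simps)
    show "0 \<le> K1' x" unfolding K1'_def using a b c by linarith
  qed
  have boundA0: "\<bar>integral {1..r} (\<lambda>s. K1 s * F s)\<bar> \<le> K1 r * S + K1 1 * S + \<bar>K1 r - K1 1\<bar> * S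
            + M1 * integral {1..r} (\<lambda>s. \<bar>g s\<bar>)"
    by (rule ibp_bound[OF r dK1 _ cK1' _ _ _ hK1 sK1]) (use r dG cF[of 1 r] hGS in auto)
  have K11: "K1 1 = 0" by (simp add: K1_def)
  have Kr: "K1 r \<le> M1" "0 \<le> K1 r" using hK1[of r] r by auto
  have i1: "M1 * integral {1..r} (\<lambda>s. \<bar>g s\<bar>) \<le> M1 * L"
    using hL[of 1 r] hK1[of r] r by (intro mult_left_mono) auto
  have i2: "K1 r * S \<le> M1 * S" using Kr S0 by (intro mult_right_mono) auto
  have e1: "\<bar>K1 r - K1 1\<bar> * S = K1 r * S" using K11 Kr by simp
  have e2: "K1 1 * S = 0" using K11 by simp
  have "\<bar>integral {1..r} (\<lambda>s. K1 s * F s)\<bar> \<le> M1 * S + M1 * S + M1 * L"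
    using boundA0 e1 e2 i1 i2 by linarith
  also have "\<dots> = M1 * (2 * S + L)" by (simp add: algebra_simps)
  finally have boundA1: "\<bar>integral {1..r} (\<lambda>s. K1 s * F s)\<bar> \<le> M1 * (2 * S + L)" .
  have "A = r powr (-m) * integral {1..r} (\<lambda>s. K1 s * F s)"
    unfolding A_def K1_def by (simp add: powr_minus_divide)
  then have "\<bar>A\<bar> \<le> r powr (-m) * (M1 * (2 * S + L))"
    using boundA1 by (simp add: abs_mult mult_left_mono)
  also have "r powr (-m) * M1 = r" unfolding M1_def using r by (simp add: powr_add[symmetric])
  ultimately have boundA: "\<bar>A\<bar> \<le> r * (2 * S + L)" by (simp add: mult.assoc[symmetric])
  define K2 where "K2 = (\<lambda>s::real. s powr (1-m))"
  define K2' where "K2' = (\<lambda>s::real. (1-m) * s powr (-m))"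
  define M2 where "M2 = r powr (1-m)"
  define h where "h = (\<lambda>s. s powr (1 - m) * F s)"
  define B where "B = integral {r..} (\<lambda>s. (s powr (1 - m) * r powr m - s powr (1 - m) * r powr (- m)) * F s)"
  have hT: "\<bar>integral {r..T} h\<bar> \<le> M2 * (2 * S + L)" if T: "T \<ge> r" for T
  proof -
    have dK2: "(K2 has_real_derivative K2' x) (at x)" if "x \<in> {r..T}" for x
    proof -
      have "x > 0" using that r by auto
      from has_real_derivative_powr[OF this, of "1-m"]
      show ?thesis unfolding K2_def K2'_def by simp
    qed
    have cK2': "continuous_on {r..T} K2'"
      unfolding K2'_def using r by (intro continuous_intros) auto
    have hK2: "0 \<le> K2 x \<and> K2 x \<le> M2" if "x \<in> {r..T}" for x
      unfolding K2_def M2_def using that m1 r by (auto intro: powr_mono2')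
    have sK2: "(\<forall>x\<in>{r..T}. 0 \<le> K2' x) \<or> (\<forall>x\<in>{r..T}. K2' x \<le> 0)"
      using m1 unfolding K2'_def by (auto intro!: disjI2 mult_nonpos_nonneg)
    have b0: "\<bar>integral {r..T} (\<lambda>s. K2 s * F s)\<bar> \<le> K2 T * S + K2 r * S + \<bar>K2 T - K2 r\<bar> * S
            + M2 * integral {r..T} (\<lambda>s. \<bar>g s\<bar>)"
      by (rule ibp_bound[where G=G and g=g and F=F and S=S, OF T dK2 _ cK2' _ _ _ hK2 sK2]) (use r T dG cF[of r T] hGS in auto)
    have "K2 r = M2" by (simp add: K2_def M2_def)
    moreover have "K2 T \<le> M2" "0 \<le> K2 T" using hK2[of T] T by auto
    moreover have "M2 * integral {r..T} (\<lambda>s. \<bar>g s\<bar>) \<le> M2 * L"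
      using hL[of r T] r hK2[of T] T by (intro mult_left_mono) auto
    ultimately have "\<bar>integral {r..T} (\<lambda>s. K2 s * F s)\<bar> \<le> M2 * (2 * S + L)"
      using b0 S0 by (simp add: algebra_simps)
    then show ?thesis by (simp add: h_def K2_def)
  qed
  have hr: "h integrable_on {r..}" using Ici_integrable_sub[OF _ r] hint h_def by blast
  have lim: "((\<lambda>T. \<bar>integral {r..T} h\<bar>) \<longlongrightarrow> \<bar>integral {r..} h\<bar>) at_top"
    by (intro tendsto_rabs Ici_limit) (use hr in auto)
  have bh: "\<bar>integral {r..} h\<bar> \<le> M2 * (2 * S + L)"
    by (rule tendsto_upperbound[OF lim]) (auto intro: eventually_at_top_linorderI[of r] hT)
  have eqB: "(\<lambda>s. (s powr (1 - m) * r powr m - s powr (1 - m) * r powr (- m)) * F s)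
      = (\<lambda>s. (r powr m - r powr (-m)) * h s)" by (rule ext) (simp add: h_def algebra_simps)
  have "B = (r powr m - r powr (-m)) * integral {r..} h"
    unfolding B_def eqB by (rule integral_mult[OF hr, symmetric])
  moreover have c0: "0 \<le> r powr m - r powr (-m)" "r powr m - r powr (-m) \<le> r powr m"
    using r m1 by (auto intro: powr_mono)
  ultimately have "\<bar>B\<bar> \<le> r powr m * (M2 * (2 * S + L))"
    using bh S0 L0 by (auto simp: abs_mult intro!: mult_mono)
  also have "r powr m * M2 = r" unfolding M2_def using r by (simp add: powr_add[symmetric])
  ultimately have boundB: "\<bar>B\<bar> \<le> r * (2 * S + L)" by (simp add: mult.assoc[symmetric])
  have phi: "green_phi n xi f r = - (1 / (2 * m)) * (A + B)"
    unfolding green_phi_def Let_def A_def B_def m_def F_def by simp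
  have "\<bar>green_phi n xi f r\<bar> * (2 * m) = \<bar>A + B\<bar>"
    unfolding phi using m1 by (simp add: abs_mult)
  also have "\<dots> \<le> 2 * r * (2 * S + L)" using boundA boundB by linarith
  finally have "\<bar>green_phi n xi f r\<bar> * m \<le> r * (2 * S + L)" by linarith
  then have "m * (\<bar>green_phi n xi f r\<bar> / r) \<le> 2 * S + L"
    using r by (simp add: field_simps)
  also have "\<dots> \<le> 2 * (S + L)" using L0 by (simp add: algebra_simps)
  finally show "real_of_int \<bar>n\<bar> * (\<bar>green_phi n xi f r\<bar> / r)
            \<le> 2 * ((SUP s\<in>{1..}. \<bar>xi s * f s\<bar>) + integral {1..} (\<lambda>s. \<bar>deriv xi s * f s\<bar>))"
    by (simp add: m_def S_def L_def)
qed

end
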